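(* Let $\{X_t\}_{t\in\mathbb{Z}}$ be a zero-mean strictly stationary real-valued process whose joint cumulants satisfy $\mathrm{cum}(X_{t+u_1},\dots,X_{t+u_k})=\mathrm{cum}(X_{u_1},\dots,X_{u_k})$ for all $k>0$, $u_1,\dots,u_k,t\in\mathbb{Z}$, and such that for every $k\geq 2$, $\sum_{u_1,\dots,u_{k-1}=-\infty}^\infty |c_k(u_1,\dots,u_{k-1})|<\infty$, where $c_k(u_1,\dots,u_{k-1})=\mathrm{cum}(X_{u_1},\dots,X_{u_{k-1}},X_0)$. Let $(\lambda_t)_{t\geq1}$ be forgetting factors in $(0,1]$, with taper, tapered Fourier transform $J_T(f;\boldsymbol{\lambda}_{T-1})$ and Fourier moments $H^{(T)}_k$ as in the context. Then for every $k\geq 2$ and frequencies $f_1,\dots,f_k$, as $T\to\infty$, $$\mathrm{cum}\{J_T(f_1;\boldsymbol{\lambda}_{T-1}),\dots,J_T(f_k;\boldsymbol{\lambda}_{T-1})\}=(2\pi)^{k-1}H^{(T)}_k\Big(\sum_{j=1}^k f_j\Big)\mathcal{C}_k(f_1,\dots,f_{k-1})+o(T).$$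
   Context: Forgetting factors are scalars in $(0,1]$. Given $\boldsymbol{\lambda}_{T-1}=(\lambda_1,\dots,\lambda_{T-1})$, the taper is $h_T(t)=1$ if $t=T$, $h_T(t)=\prod_{s=t}^{T-1}\lambda_s$ for $t=1,\dots,T-1$, and $h_T(t)=0$ otherwise. $J_T(f;\boldsymbol{\lambda}_{T-1})=\sum_{t=1}^T h_T(t)X_te^{-i2\pi ft}$, $H^{(T)}_k(f)=\sum_{t=1}^T[h_T(t)]^ke^{-i2\pi ft}$. The $k$-th order cumulant spectrum is $\mathcal{C}_k(f_1,\dots,f_{k-1})=(2\pi)^{-k+1}\sum_{u_1,\dots,u_{k-1}=-\infty}^{\infty}c_k(u_1,\dots,u_{k-1})\exp\{-i2\pi\sum_{j=1}^{k-1}u_jf_j\}$. Cumulants of complex random variables are multilinear (unconjugated). *)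

theory Defs
  imports "HOL-Probability.Probability" "HOL-Library.Landau_Symbols" "HOL-Library.Disjoint_Sets"
begin

text \<open>Joint cumulant of a finite list of complex random variables, defined by the
  moment-cumulant (Leonov-Shiryaev) partition formula; it is multilinear and unconjugated.\<close>
definition cum :: "'a measure \<Rightarrow> ('a \<Rightarrow> complex) list \<Rightarrow> complex" where
  "cum M Ys = (\<Sum>P\<in>{P. partition_on {..<length Ys} P}.
      (-1) ^ (card P - 1) * of_nat (fact (card P - 1)) *
      (\<Prod>B\<in>P. integral\<^sup>L M (\<lambda>\<omega>. \<Prod>i\<in>B. (Ys ! i) \<omega>)))"

definition cumfun :: "'a measure \<Rightarrow> (int \<Rightarrow> 'a \<Rightarrow> real) \<Rightarrow> int list \<Rightarrow> complex" where
  "cumfun M X us = cum M (map (\<lambda>u \<omega>. complex_of_real (X u \<omega>)) (us @ [0]))"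

definition cum_spectrum :: "'a measure \<Rightarrow> (int \<Rightarrow> 'a \<Rightarrow> real) \<Rightarrow> nat \<Rightarrow> real list \<Rightarrow> complex" where
  "cum_spectrum M X k fs =
     complex_of_real ((2 * pi) powi (- int k + 1)) *
     infsum (\<lambda>us. cumfun M X us *
        exp (- \<i> * complex_of_real (2 * pi * (\<Sum>j<k - 1. real_of_int (us ! j) * fs ! j))))
       {us. length us = k - 1}"

definition taper :: "(nat \<Rightarrow> real) \<Rightarrow> nat \<Rightarrow> int \<Rightarrow> real" where
  "taper lam T t = (if t = int T then 1
     else if 1 \<le> t \<and> t \<le> int T - 1 then (\<Prod>s\<in>{nat t..T - 1}. lam s) else 0)"

definition tapered_ft :: "(nat \<Rightarrow> real) \<Rightarrow> (int \<Rightarrow> 'a \<Rightarrow> real) \<Rightarrow> nat \<Rightarrow> real \<Rightarrow> 'a \<Rightarrow> complex" where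
  "tapered_ft lam X T f \<omega> = (\<Sum>t=1..T. complex_of_real (taper lam T (int t) * X (int t) \<omega>) *
       exp (- \<i> * complex_of_real (2 * pi * f * real t)))"

definition fourier_moment :: "(nat \<Rightarrow> real) \<Rightarrow> nat \<Rightarrow> nat \<Rightarrow> real \<Rightarrow> complex" where
  "fourier_moment lam T k f = (\<Sum>t=1..T. complex_of_real ((taper lam T (int t)) ^ k) *
       exp (- \<i> * complex_of_real (2 * pi * f * real t)))"

end

theory Submission
  imports Defs
begin


lemma prod_sum_PiE_partition:
  fixes \<phi> :: "'i set \<Rightarrow> ('i \<Rightarrow> 'b) \<Rightarrow> 'c::comm_semiring_1"
  assumes "finite P" "\<And>B. B \<in> P \<Longrightarrow> finite B" "disjoint P" "finite A"
  shows "(\<Prod>B\<in>P. \<Sum>g\<in>PiE B (\<lambda>_. A). \<phi> B g)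
       = (\<Sum>g\<in>PiE (\<Union>P) (\<lambda>_. A). \<Prod>B\<in>P. \<phi> B (restrict g B))"
  using assms
proof (induction P rule: finite_induct)
  case empty
  then show ?case by simp
next
  case (insert B P)
  have dP: "disjoint P" using insert.prems(2) by (auto simp: pairwise_def)
  have dB: "B \<inter> \<Union>P = {}" using insert.prems(2) insert.hyps(2)
    by (auto simp: pairwise_def disjnt_def)
  have IH: "(\<Prod>B\<in>P. \<Sum>g\<in>PiE B (\<lambda>_. A). \<phi> B g)
       = (\<Sum>g\<in>PiE (\<Union>P) (\<lambda>_. A). \<Prod>B\<in>P. \<phi> B (restrict g B))"
    by (rule insert.IH) (use insert.prems dP in auto)
  have "(\<Prod>B\<in>insert B P. \<Sum>g\<in>PiE B (\<lambda>_. A). \<phi> B g)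
     = (\<Sum>g1\<in>PiE B (\<lambda>_. A). \<phi> B g1) * (\<Sum>g2\<in>PiE (\<Union>P) (\<lambda>_. A). \<Prod>B\<in>P. \<phi> B (restrict g2 B))"
    using insert.hyps IH by simp
  also have "\<dots> = (\<Sum>gg\<in>PiE B (\<lambda>_. A) \<times> PiE (\<Union>P) (\<lambda>_. A).
        \<phi> B (fst gg) * (\<Prod>B\<in>P. \<phi> B (restrict (snd gg) B)))"
    by (simp add: sum_product sum.cartesian_product case_prod_beta)
  also have "\<dots> = (\<Sum>g\<in>PiE (B \<union> \<Union>P) (\<lambda>_. A).
        \<phi> B (restrict g B) * (\<Prod>B'\<in>P. \<phi> B' (restrict g B')))"
  proof (rule sum.reindex_bij_witness[where i = "\<lambda>g. (restrict g B, restrict g (\<Union>P))"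
        and j = "\<lambda>gg x. if x \<in> B then fst gg x else snd gg x"])
    fix gg assume gg: "gg \<in> PiE B (\<lambda>_. A) \<times> PiE (\<Union>P) (\<lambda>_. A)"
    show "(restrict (\<lambda>x. if x \<in> B then fst gg x else snd gg x) B,
           restrict (\<lambda>x. if x \<in> B then fst gg x else snd gg x) (\<Union>P)) = gg"
      using gg dB by (cases gg) (auto simp: PiE_def extensional_def fun_eq_iff)
    show "(\<lambda>x. if x \<in> B then fst gg x else snd gg x) \<in> PiE (B \<union> \<Union>P) (\<lambda>_. A)"
      using gg by (cases gg) (auto simp: PiE_def extensional_def Pi_def)
    have r1: "restrict (\<lambda>x. if x \<in> B then fst gg x else snd gg x) B = fst gg"
      using gg by (auto simp: PiE_def extensional_def fun_eq_iff)
    have r2: "\<And>B'. B' \<in> P \<Longrightarrow> restrict (\<lambda>x. if x \<in> B then fst gg x else snd gg x) B'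
        = restrict (snd gg) B'"
      using dB by (auto simp: fun_eq_iff)
    show "\<phi> B (restrict (\<lambda>x. if x \<in> B then fst gg x else snd gg x) B) *
        (\<Prod>B'\<in>P. \<phi> B' (restrict (\<lambda>x. if x \<in> B then fst gg x else snd gg x) B'))
       = \<phi> B (fst gg) * (\<Prod>B\<in>P. \<phi> B (restrict (snd gg) B))"
      using r1 r2 by (metis (no_types, lifting) prod.cong)
  next
    fix g assume g: "g \<in> PiE (B \<union> \<Union>P) (\<lambda>_. A)"
    show "(\<lambda>x. if x \<in> B then fst (restrict g B, restrict g (\<Union>P)) x
            else snd (restrict g B, restrict g (\<Union>P)) x) = g"
      using g by (auto simp: PiE_def extensional_def fun_eq_iff)
    show "(restrict g B, restrict g (\<Union>P)) \<in> PiE B (\<lambda>_. A) \<times> PiE (\<Union>P) (\<lambda>_. A)"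
      using g by auto
  qed
  also have "\<dots> = (\<Sum>g\<in>PiE (\<Union>(insert B P)) (\<lambda>_. A). \<Prod>B\<in>insert B P. \<phi> B (restrict g B))"
    using insert.hyps by simp
  finally show ?case .
qed

lemma integral_prod_sum_block:
  fixes Z :: "'t \<Rightarrow> 'a \<Rightarrow> complex" and c :: "nat \<Rightarrow> 't \<Rightarrow> complex"
  assumes A: "finite A" and B: "finite B"
    and int: "\<And>B (g::nat \<Rightarrow> 't). finite B \<Longrightarrow> integrable M (\<lambda>\<omega>. \<Prod>i\<in>B. Z (g i) \<omega>)"
  shows "integral\<^sup>L M (\<lambda>\<omega>. \<Prod>i\<in>B. \<Sum>t\<in>A. c i t * Z t \<omega>)
       = (\<Sum>g\<in>PiE B (\<lambda>_. A). (\<Prod>i\<in>B. c i (g i)) * integral\<^sup>L M (\<lambda>\<omega>. \<Prod>i\<in>B. Z (g i) \<omega>))"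
proof -
  have eq: "(\<lambda>\<omega>. \<Prod>i\<in>B. \<Sum>t\<in>A. c i t * Z t \<omega>)
      = (\<lambda>\<omega>. \<Sum>g\<in>PiE B (\<lambda>_. A). (\<Prod>i\<in>B. c i (g i)) * (\<Prod>i\<in>B. Z (g i) \<omega>))"
    using A B by (simp add: prod_sum_PiE prod.distrib)
  have "integral\<^sup>L M (\<lambda>\<omega>. \<Prod>i\<in>B. \<Sum>t\<in>A. c i t * Z t \<omega>)
      = integral\<^sup>L M (\<lambda>\<omega>. \<Sum>g\<in>PiE B (\<lambda>_. A). (\<Prod>i\<in>B. c i (g i)) * (\<Prod>i\<in>B. Z (g i) \<omega>))"
    by (simp only: eq)
  also have "\<dots> = (\<Sum>g\<in>PiE B (\<lambda>_. A). integral\<^sup>L M (\<lambda>\<omega>. (\<Prod>i\<in>B. c i (g i)) * (\<Prod>i\<in>B. Z (g i) \<omega>)))"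
    using int B by (intro Bochner_Integration.integral_sum[where f = "\<lambda>g \<omega>. (\<Prod>i\<in>B. c i (g i)) * (\<Prod>i\<in>B. Z (g i) \<omega>)"]) (auto intro!: integrable_mult_right int[OF B])
  also have "\<dots> = (\<Sum>g\<in>PiE B (\<lambda>_. A). (\<Prod>i\<in>B. c i (g i)) * integral\<^sup>L M (\<lambda>\<omega>. \<Prod>i\<in>B. Z (g i) \<omega>))"
    by simp
  finally show ?thesis .
qed

lemma cum_multilinear:
  fixes Z :: "'t \<Rightarrow> 'a \<Rightarrow> complex" and c :: "nat \<Rightarrow> 't \<Rightarrow> complex"
  assumes A: "finite A"
    and int: "\<And>B (g::nat \<Rightarrow> 't). finite B \<Longrightarrow> integrable M (\<lambda>\<omega>. \<Prod>i\<in>B. Z (g i) \<omega>)"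
  shows "cum M (map (\<lambda>i \<omega>. \<Sum>t\<in>A. c i t * Z t \<omega>) [0..<k])
       = (\<Sum>g\<in>PiE {..<k} (\<lambda>_. A). (\<Prod>i<k. c i (g i)) * cum M (map (\<lambda>i. Z (g i)) [0..<k]))"
proof -
  define coef where "coef P = (-1::complex) ^ (card P - 1) * of_nat (fact (card P - 1))" for P :: "nat set set"
  have key: "(\<Prod>B\<in>P. integral\<^sup>L M (\<lambda>\<omega>. \<Prod>i\<in>B. ((map (\<lambda>i \<omega>. \<Sum>t\<in>A. c i t * Z t \<omega>) [0..<k]) ! i) \<omega>))
     = (\<Sum>g\<in>PiE {..<k} (\<lambda>_. A). (\<Prod>i<k. c i (g i)) *
          (\<Prod>B\<in>P. integral\<^sup>L M (\<lambda>\<omega>. \<Prod>i\<in>B. ((map (\<lambda>i. Z (g i)) [0..<k]) ! i) \<omega>)))"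
    if P: "partition_on {..<k} P" for P
  proof -
    have fP: "finite P" using P finite_elements by blast
    have sub: "\<And>B. B \<in> P \<Longrightarrow> B \<subseteq> {..<k}" using P by (auto simp: partition_on_def)
    have fB: "\<And>B. B \<in> P \<Longrightarrow> finite B" using sub finite_subset by blast
    have dP: "disjoint P" using P by (auto simp: partition_on_def)
    have UP: "\<Union>P = {..<k}" using P by (auto simp: partition_on_def)
    have "(\<Prod>B\<in>P. integral\<^sup>L M (\<lambda>\<omega>. \<Prod>i\<in>B. ((map (\<lambda>i \<omega>. \<Sum>t\<in>A. c i t * Z t \<omega>) [0..<k]) ! i) \<omega>))
        = (\<Prod>B\<in>P. integral\<^sup>L M (\<lambda>\<omega>. \<Prod>i\<in>B. \<Sum>t\<in>A. c i t * Z t \<omega>))"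
    proof (rule prod.cong[OF refl])
      fix B assume "B \<in> P"
      then have "\<And>i. i \<in> B \<Longrightarrow> i < k" using sub by auto
      then show "integral\<^sup>L M (\<lambda>\<omega>. \<Prod>i\<in>B. ((map (\<lambda>i \<omega>. \<Sum>t\<in>A. c i t * Z t \<omega>) [0..<k]) ! i) \<omega>)
          = integral\<^sup>L M (\<lambda>\<omega>. \<Prod>i\<in>B. \<Sum>t\<in>A. c i t * Z t \<omega>)"
        by (intro Bochner_Integration.integral_cong refl prod.cong) auto
    qed
    also have "\<dots> = (\<Prod>B\<in>P. \<Sum>g\<in>PiE B (\<lambda>_. A). (\<Prod>i\<in>B. c i (g i)) * integral\<^sup>L M (\<lambda>\<omega>. \<Prod>i\<in>B. Z (g i) \<omega>))"
      using integral_prod_sum_block[OF A _ int] fB by (intro prod.cong) auto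
    also have "\<dots> = (\<Sum>g\<in>PiE (\<Union>P) (\<lambda>_. A). \<Prod>B\<in>P. (\<Prod>i\<in>B. c i (restrict g B i)) * integral\<^sup>L M (\<lambda>\<omega>. \<Prod>i\<in>B. Z (restrict g B i) \<omega>))"
      by (rule prod_sum_PiE_partition[OF fP fB dP A])
    also have "\<dots> = (\<Sum>g\<in>PiE {..<k} (\<lambda>_. A). (\<Prod>i<k. c i (g i)) *
          (\<Prod>B\<in>P. integral\<^sup>L M (\<lambda>\<omega>. \<Prod>i\<in>B. ((map (\<lambda>i. Z (g i)) [0..<k]) ! i) \<omega>)))"
      unfolding UP
    proof (rule sum.cong[OF refl])
      fix g :: "nat \<Rightarrow> 't"
      have e1: "(\<Prod>B\<in>P. (\<Prod>i\<in>B. c i (restrict g B i)) * integral\<^sup>L M (\<lambda>\<omega>. \<Prod>i\<in>B. Z (restrict g B i) \<omega>))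
          = (\<Prod>B\<in>P. (\<Prod>i\<in>B. c i (g i)) * integral\<^sup>L M (\<lambda>\<omega>. \<Prod>i\<in>B. ((map (\<lambda>i. Z (g i)) [0..<k]) ! i) \<omega>))"
      proof (rule prod.cong[OF refl])
        fix B assume "B \<in> P"
        then have "\<And>i. i \<in> B \<Longrightarrow> i < k" using sub by auto
        then show "(\<Prod>i\<in>B. c i (restrict g B i)) * integral\<^sup>L M (\<lambda>\<omega>. \<Prod>i\<in>B. Z (restrict g B i) \<omega>)
           = (\<Prod>i\<in>B. c i (g i)) * integral\<^sup>L M (\<lambda>\<omega>. \<Prod>i\<in>B. ((map (\<lambda>i. Z (g i)) [0..<k]) ! i) \<omega>)"
          by (intro arg_cong2[where f="(*)"] prod.cong Bochner_Integration.integral_cong refl) auto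
      qed
      have e2: "(\<Prod>B\<in>P. \<Prod>i\<in>B. c i (g i)) = (\<Prod>i<k. c i (g i))"
        using fB dP UP[symmetric] by (simp, subst prod.Union_disjoint) (auto simp: pairwise_def disjnt_def)
      show "(\<Prod>B\<in>P. (\<Prod>i\<in>B. c i (restrict g B i)) * integral\<^sup>L M (\<lambda>\<omega>. \<Prod>i\<in>B. Z (restrict g B i) \<omega>))
          = (\<Prod>i<k. c i (g i)) * (\<Prod>B\<in>P. integral\<^sup>L M (\<lambda>\<omega>. \<Prod>i\<in>B. ((map (\<lambda>i. Z (g i)) [0..<k]) ! i) \<omega>))"
        by (subst e1) (simp only: prod.distrib e2)
    qed
    finally show ?thesis .
  qed
  have "cum M (map (\<lambda>i \<omega>. \<Sum>t\<in>A. c i t * Z t \<omega>) [0..<k])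
      = (\<Sum>P\<in>{P. partition_on {..<k} P}. coef P *
           (\<Prod>B\<in>P. integral\<^sup>L M (\<lambda>\<omega>. \<Prod>i\<in>B. ((map (\<lambda>i \<omega>. \<Sum>t\<in>A. c i t * Z t \<omega>) [0..<k]) ! i) \<omega>)))"
    unfolding cum_def coef_def by simp
  also have "\<dots> = (\<Sum>P\<in>{P. partition_on {..<k} P}. coef P *
           (\<Sum>g\<in>PiE {..<k} (\<lambda>_. A). (\<Prod>i<k. c i (g i)) *
          (\<Prod>B\<in>P. integral\<^sup>L M (\<lambda>\<omega>. \<Prod>i\<in>B. ((map (\<lambda>i. Z (g i)) [0..<k]) ! i) \<omega>))))"
    using key by (intro sum.cong) auto
  also have "\<dots> = (\<Sum>g\<in>PiE {..<k} (\<lambda>_. A). (\<Prod>i<k. c i (g i)) *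
       (\<Sum>P\<in>{P. partition_on {..<k} P}. coef P *
          (\<Prod>B\<in>P. integral\<^sup>L M (\<lambda>\<omega>. \<Prod>i\<in>B. ((map (\<lambda>i. Z (g i)) [0..<k]) ! i) \<omega>))))"
    unfolding sum_distrib_left by (subst sum.swap) (simp add: mult_ac)
  also have "\<dots> = (\<Sum>g\<in>PiE {..<k} (\<lambda>_. A). (\<Prod>i<k. c i (g i)) * cum M (map (\<lambda>i. Z (g i)) [0..<k]))"
    unfolding cum_def coef_def by simp
  finally show ?thesis .
qed




lemma mono_shift_sum_le:
  fixes m :: "int \<Rightarrow> real"
  assumes mono: "mono m" and b: "\<And>t. 0 \<le> m t \<and> m t \<le> 1"
  shows "(\<Sum>i<n. m (a + int i + int u) - m (a + int i)) \<le> real u"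
proof -
  have "(\<Sum>i<n. m (a + int i + int u) - m (a + int i))
      = (\<Sum>i<n. \<Sum>j<u. m (a + int i + int (Suc j)) - m (a + int i + int j))"
  proof (rule sum.cong[OF refl])
    fix i
    show "m (a + int i + int u) - m (a + int i) = (\<Sum>j<u. m (a + int i + int (Suc j)) - m (a + int i + int j))"
      using sum_lessThan_telescope[of "\<lambda>j. m (a + int i + int j)" u] by simp
  qed
  also have "\<dots> = (\<Sum>j<u. \<Sum>i<n. m (a + int j + int (Suc i)) - m (a + int j + int i))"
    by (subst sum.swap) (simp add: algebra_simps)
  also have "\<dots> = (\<Sum>j<u. m (a + int j + int n) - m (a + int j))"
  proof (rule sum.cong[OF refl])
    fix j
    show "(\<Sum>i<n. m (a + int j + int (Suc i)) - m (a + int j + int i)) = m (a + int j + int n) - m (a + int j)"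
      using sum_lessThan_telescope[of "\<lambda>i. m (a + int j + int i)" n] by simp
  qed
  also have "\<dots> \<le> (\<Sum>j<u. 1)"
    by (intro sum_mono) (use b in \<open>smt (verit)\<close>)
  finally show ?thesis by simp
qed

lemma mono_abs_shift_sum_le:
  fixes m :: "int \<Rightarrow> real"
  assumes mono: "mono m" and b: "\<And>t. 0 \<le> m t \<and> m t \<le> 1"
  shows "(\<Sum>i<n. \<bar>m (a + int i + u) - m (a + int i)\<bar>) \<le> real_of_int \<bar>u\<bar>"
proof (cases "u \<ge> 0")
  case True
  have "(\<Sum>i<n. \<bar>m (a + int i + u) - m (a + int i)\<bar>) = (\<Sum>i<n. m (a + int i + int (nat u)) - m (a + int i))"
    using True mono by (intro sum.cong) (auto simp: mono_def)
  also have "\<dots> \<le> real (nat u)" by (rule mono_shift_sum_le[OF mono b])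
  finally show ?thesis using True by simp
next
  case False
  have "(\<Sum>i<n. \<bar>m (a + int i + u) - m (a + int i)\<bar>) = (\<Sum>i<n. m ((a + u) + int i + int (nat (-u))) - m ((a + u) + int i))"
    using False mono by (intro sum.cong) (auto simp: mono_def algebra_simps)
  also have "\<dots> \<le> real (nat (-u))" by (rule mono_shift_sum_le[OF mono b])
  finally show ?thesis using False by simp
qed

lemma taper_props:
  assumes lam: "\<And>t. t \<ge> 1 \<Longrightarrow> 0 < lam t \<and> lam t \<le> 1" and T: "T \<ge> 1"
  shows "0 \<le> taper lam T t" "taper lam T t \<le> 1"
    "t < 1 \<Longrightarrow> taper lam T t = 0" "t > int T \<Longrightarrow> taper lam T t = 0"
    "t \<le> t' \<Longrightarrow> t' \<le> int T \<Longrightarrow> taper lam T t \<le> taper lam T t'"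
proof -
  have p01: "0 \<le> (\<Prod>s\<in>S. lam s) \<and> (\<Prod>s\<in>S. lam s) \<le> 1" if "\<And>s. s \<in> S \<Longrightarrow> s \<ge> 1" for S
  proof -
    have a: "\<And>s. s \<in> S \<Longrightarrow> 0 \<le> lam s \<and> lam s \<le> 1" using that lam by (meson less_imp_le)
    show ?thesis using a by (simp add: prod_nonneg prod_le_1)
  qed
  have p1: "0 \<le> (\<Prod>s\<in>{nat x..T-1}. lam s) \<and> (\<Prod>s\<in>{nat x..T-1}. lam s) \<le> 1" if "x \<ge> 1" for x
    using that by (intro p01) auto
  have p2: "0 \<le> (\<Prod>s\<in>{nat x..<nat y}. lam s) \<and> (\<Prod>s\<in>{nat x..<nat y}. lam s) \<le> 1" if "x \<ge> 1" for x y
    using that by (intro p01) auto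
  show "0 \<le> taper lam T t" "taper lam T t \<le> 1"
    unfolding taper_def using p1[of t] by auto
  show "t < 1 \<Longrightarrow> taper lam T t = 0" "t > int T \<Longrightarrow> taper lam T t = 0"
    using T unfolding taper_def by auto
  assume tt: "t \<le> t'" "t' \<le> int T"
  show "taper lam T t \<le> taper lam T t'"
  proof (cases "t < 1")
    case True
    then have "taper lam T t = 0" using T unfolding taper_def by auto
    moreover have "0 \<le> taper lam T t'"
      unfolding taper_def using p1[of t'] by auto
    ultimately show ?thesis by simp
  next
    case False
    show ?thesis
    proof (cases "t' = int T")
      case True
      then show ?thesis unfolding taper_def using p1[of t] False by auto
    next
      case False2: False
      then have t'T: "t' \<le> int T - 1" using tt by simp
      have split: "{nat t..T-1} = {nat t..<nat t'} \<union> {nat t'..T-1}" using tt False by auto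
      have "(\<Prod>s\<in>{nat t..T-1}. lam s) = (\<Prod>s\<in>{nat t..<nat t'}. lam s) * (\<Prod>s\<in>{nat t'..T-1}. lam s)"
        unfolding split by (rule prod.union_disjoint) auto
      also have "\<dots> \<le> (\<Prod>s\<in>{nat t'..T-1}. lam s)"
        using p2[of t "t'"] p1[of "t'"] False tt
        by (intro mult_left_le_one_le) auto
      finally show ?thesis unfolding taper_def using False False2 tt t'T by auto
    qed
  qed
qed

lemma taper_shift_sum_le:
  assumes lam: "\<And>t. t \<ge> 1 \<Longrightarrow> 0 < lam t \<and> lam t \<le> 1" and T: "T \<ge> 1"
  shows "(\<Sum>t=1..T. \<bar>taper lam T (int t + u) - taper lam T (int t)\<bar>) \<le> 2 * real_of_int \<bar>u\<bar>"
proof -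
  define h where "h = taper lam T"
  define g where "g t = (if t > int T then 1 else h t)" for t
  define \<iota> where "\<iota> t = (if t > int T then 1 else (0::real))" for t
  note tp = taper_props[where lam=lam and T=T, OF lam T, folded h_def]
  have hg: "h t = g t - \<iota> t" for t using tp(4)[where t=t] by (auto simp: g_def \<iota>_def)
  have gm: "mono g" unfolding mono_def g_def using tp by auto
  have gb: "0 \<le> g t \<and> g t \<le> 1" for t unfolding g_def using tp by auto
  have im: "mono \<iota>" unfolding mono_def \<iota>_def by auto
  have ib: "0 \<le> \<iota> t \<and> \<iota> t \<le> 1" for t unfolding \<iota>_def by auto
  have "(\<Sum>t=1..T. \<bar>h (int t + u) - h (int t)\<bar>) = (\<Sum>i<T. \<bar>h (1 + int i + u) - h (1 + int i)\<bar>)"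
    by (simp add: sum.atLeast1_atMost_eq add_ac)
  also have "\<dots> \<le> (\<Sum>i<T. \<bar>g (1 + int i + u) - g (1 + int i)\<bar> + \<bar>\<iota> (1 + int i + u) - \<iota> (1 + int i)\<bar>)"
    unfolding hg by (intro sum_mono) linarith
  also have "\<dots> = (\<Sum>i<T. \<bar>g (1 + int i + u) - g (1 + int i)\<bar>) + (\<Sum>i<T. \<bar>\<iota> (1 + int i + u) - \<iota> (1 + int i)\<bar>)"
    by (simp add: sum.distrib)
  also have "\<dots> \<le> real_of_int \<bar>u\<bar> + real_of_int \<bar>u\<bar>"
    by (intro add_mono mono_abs_shift_sum_le gm gb im ib)
  finally show ?thesis unfolding h_def by simp
qed




lemma infsum_weighted_small:
  fixes w :: "'u \<Rightarrow> real" and R :: "nat \<Rightarrow> 'u \<Rightarrow> real" and B :: "'u \<Rightarrow> real"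
  assumes ws: "w summable_on S" and w0: "\<And>u. u \<in> S \<Longrightarrow> 0 \<le> w u"
    and K: "K \<ge> 0"
    and R0: "\<And>T u. T \<ge> 1 \<Longrightarrow> u \<in> S \<Longrightarrow> 0 \<le> R T u"
    and RK: "\<And>T u. T \<ge> 1 \<Longrightarrow> u \<in> S \<Longrightarrow> R T u \<le> K * real T"
    and RB: "\<And>T u. T \<ge> 1 \<Longrightarrow> u \<in> S \<Longrightarrow> R T u \<le> B u"
    and e: "\<epsilon> > 0"
  shows "eventually (\<lambda>T. (\<lambda>u. w u * R T u) summable_on S \<and> infsum (\<lambda>u. w u * R T u) S \<le> \<epsilon> * real T) at_top"
proof -
  define \<delta> where "\<delta> = \<epsilon> / (2 * (K + 1))"
  have \<delta>: "\<delta> > 0" using e K by (simp add: \<delta>_def)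
  have "(sum w \<longlongrightarrow> infsum w S) (finite_subsets_at_top S)" by (rule infsum_tendsto[OF ws])
  then have "eventually (\<lambda>F. dist (sum w F) (infsum w S) < \<delta>) (finite_subsets_at_top S)"
    using \<delta> tendstoD by blast
  then obtain F where F: "finite F" "F \<subseteq> S" "dist (sum w F) (infsum w S) < \<delta>"
    unfolding eventually_finite_subsets_at_top by blast
  have wSF: "w summable_on (S - F)" by (rule summable_on_subset[OF ws]) auto
  have "infsum w S = infsum w (F \<union> (S - F))" using F by (simp add: Un_absorb1)
  also have "\<dots> = sum w F + infsum w (S - F)"
    using F wSF by (subst infsum_Un_disjoint) auto
  finally have tail: "infsum w (S - F) < \<delta>" using F by (simp add: dist_real_def)
  define C where "C = (\<Sum>u\<in>F. w u * B u)"
  have ev: "eventually (\<lambda>T. T \<ge> 1 \<and> real T \<ge> 2 * C / \<epsilon>) at_top"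
    by (intro eventually_conj eventually_ge_at_top) (rule eventually_compose_filterlim[OF _ filterlim_real_sequentially], rule eventually_ge_at_top)
  show ?thesis
    using ev
  proof eventually_elim
    case (elim T)
    then have T1: "T \<ge> 1" and TC: "real T \<ge> 2 * C / \<epsilon>" by auto
    have sumT: "(\<lambda>u. w u * R T u) summable_on A" if "A \<subseteq> S" for A
    proof (rule summable_on_comparison_test[where f = "\<lambda>u. w u * (K * real T)"])
      show "(\<lambda>u. w u * (K * real T)) summable_on A"
        by (intro summable_on_cmult_left summable_on_subset[OF ws that])
      fix u assume "u \<in> A"
      then have u: "u \<in> S" using that by auto
      show "w u * R T u \<le> w u * (K * real T)" using w0[OF u] RK[OF T1 u] by (intro mult_left_mono)
      show "0 \<le> w u * R T u" using w0[OF u] R0[OF T1 u] by simp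
    qed
    have "infsum (\<lambda>u. w u * R T u) S = infsum (\<lambda>u. w u * R T u) (F \<union> (S - F))"
      using F by (simp add: Un_absorb1)
    also have "\<dots> = (\<Sum>u\<in>F. w u * R T u) + infsum (\<lambda>u. w u * R T u) (S - F)"
      using F sumT[of F] sumT[of "S - F"] by (subst infsum_Un_disjoint) auto
    also have "(\<Sum>u\<in>F. w u * R T u) \<le> C"
      unfolding C_def using F w0 RB[OF T1] by (intro sum_mono mult_left_mono) auto
    also have "infsum (\<lambda>u. w u * R T u) (S - F) \<le> infsum (\<lambda>u. w u * (K * real T)) (S - F)"
      using sumT[of "S - F"] w0 RK[OF T1]
      by (intro infsum_mono summable_on_cmult_left wSF mult_left_mono) auto
    also have "\<dots> = infsum w (S - F) * (K * real T)"
      by (rule infsum_cmult_left) (use wSF in auto)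
    also have "\<dots> \<le> \<delta> * (K * real T)"
      using tail K by (intro mult_right_mono) auto
    also have "\<delta> * (K * real T) \<le> \<epsilon> / 2 * real T"
    proof -
      have "\<delta> * K \<le> \<epsilon> / 2" unfolding \<delta>_def using e K by (simp add: field_simps)
      then show ?thesis using mult_right_mono[of "\<delta> * K" "\<epsilon>/2" "real T"] by (simp add: mult_ac)
    qed
    also have "C \<le> \<epsilon> / 2 * real T" using TC e by (simp add: field_simps)
    finally have "infsum (\<lambda>u. w u * R T u) S \<le> \<epsilon> * real T" by simp
    then show ?case using sumT[of S] by simp
  qed
qed




definition ex :: "real \<Rightarrow> complex" where
  "ex r = exp (- \<i> * complex_of_real (2 * pi * r))"

lemma ex_add: "ex (a + b) = ex a * ex b"
  unfolding ex_def by (simp add: distrib_left ring_distribs exp_add[symmetric])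

lemma ex_sum: "finite A \<Longrightarrow> ex (\<Sum>j\<in>A. f j) = (\<Prod>j\<in>A. ex (f j))"
  by (induction A rule: finite_induct) (auto simp: ex_add, simp add: ex_def)

lemma norm_ex [simp]: "norm (ex r) = 1"
  unfolding ex_def by (simp add: norm_exp)

lemma summable_by_norm_bound:
  fixes f :: "'u \<Rightarrow> complex" and w :: "'u \<Rightarrow> real"
  assumes "w summable_on S" "\<And>u. u \<in> S \<Longrightarrow> norm (f u) \<le> w u * C"
  shows "(\<lambda>u. norm (f u)) summable_on S" "f summable_on S"
proof -
  show "(\<lambda>u. norm (f u)) summable_on S"
  proof (rule summable_on_comparison_test[where f = "\<lambda>u. w u * C"])
    show "(\<lambda>u. w u * C) summable_on S" by (intro summable_on_cmult_left assms)
  qed (use assms in auto)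
  then show "f summable_on S" by (rule abs_summable_summable)
qed




theorem proposition1:
  fixes M :: "'a measure" and X :: "int \<Rightarrow> 'a \<Rightarrow> real" and lam :: "nat \<Rightarrow> real"
    and k :: nat and fs :: "real list"
  assumes prob: "prob_space M"
    and meas: "\<And>t. X t \<in> borel_measurable M"
    and moments: "\<And>ts. integrable M (\<lambda>\<omega>. \<Prod>t\<leftarrow>ts. X t \<omega>)"
    and zero_mean: "\<And>t. integral\<^sup>L M (X t) = 0"
    and strict_stat: "\<And>(n::nat) (u::nat \<Rightarrow> int) (t::int).
          distr M (Pi\<^sub>M {..<n} (\<lambda>_. borel)) (\<lambda>\<omega>. \<lambda>i\<in>{..<n}. X (u i + t) \<omega>)
        = distr M (Pi\<^sub>M {..<n} (\<lambda>_. borel)) (\<lambda>\<omega>. \<lambda>i\<in>{..<n}. X (u i) \<omega>)"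
    and cum_stat: "\<And>(us::int list) (t::int). us \<noteq> [] \<Longrightarrow>
          cum M (map (\<lambda>u \<omega>. complex_of_real (X (t + u) \<omega>)) us)
        = cum M (map (\<lambda>u \<omega>. complex_of_real (X u \<omega>)) us)"
    and summ: "\<And>j::nat. j \<ge> 2 \<Longrightarrow> (\<lambda>us. norm (cumfun M X us)) summable_on {us. length us = j - 1}"
    and lam_range: "\<And>t. t \<ge> 1 \<Longrightarrow> 0 < lam t \<and> lam t \<le> 1"
    and k2: "k \<ge> 2"
    and len: "length fs = k"
  shows "(\<lambda>T. cum M (map (\<lambda>f. tapered_ft lam X T f) fs)
            - complex_of_real ((2 * pi) ^ (k - 1)) * fourier_moment lam T k (sum_list fs)
              * cum_spectrum M X k (take (k - 1) fs))
         \<in> o(\<lambda>T. complex_of_nat T)"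
proof -
  define K where "K = k - 1"
  have kK: "k = Suc K" using k2 by (simp add: K_def)
  define S where "S = {us::int list. length us = K}"
  define c where "c us = cumfun M X us" for us
  define E where "E us = ex (\<Sum>j<K. real_of_int (us ! j) * fs ! j)" for us
  define ef where "ef t = ex (sum_list fs * real t)" for t :: nat
  define P1 where "P1 T us = (\<Sum>t=1..T. ef t * complex_of_real (taper lam T (int t)) *
      (\<Prod>j<K. complex_of_real (taper lam T (int t + us ! j))))" for T us
  define P2 where "P2 T = (\<Sum>t=1..T. ef t * complex_of_real (taper lam T (int t)) *
      complex_of_real (taper lam T (int t)) ^ K)" for T
  define R where "R T us = (\<Sum>j<K. \<Sum>t=1..T. \<bar>taper lam T (int t + us ! j) - taper lam T (int t)\<bar>)" for T us
  define lhs where "lhs T = cum M (map (\<lambda>f. tapered_ft lam X T f) fs)" for T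
  define main where "main T = complex_of_real ((2 * pi) ^ (k - 1)) * fourier_moment lam T k (sum_list fs)
              * cum_spectrum M X k (take (k - 1) fs)" for T
  have csum: "(\<lambda>us. norm (c us)) summable_on S" using summ[of k] k2 by (simp add: S_def K_def c_def)
  have claimA: "lhs T = infsum (\<lambda>us. c us * E us * P1 T us) S" if T1: "T \<ge> 1" for T
  proof -
    define h where "h = taper lam T"
    define Z where "Z t \<omega> = complex_of_real (X (int t) \<omega>)" for t :: nat and \<omega>
    define cc where "cc i t = complex_of_real (h (int t)) * ex (fs ! i * real t)" for i t :: nat
    define uo where "uo g = map (\<lambda>j. int (g j) - int (g K)) [0..<K]" for g :: "nat \<Rightarrow> nat"
    define F where "F t us = c us * E us * (ef t * complex_of_real (h (int t)) *
        (\<Prod>j<K. complex_of_real (h (int t + us ! j))))" for t :: nat and us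
    define PE where "PE = PiE {..<k} (\<lambda>_. {1..T})"
    define L where "L = {us. set us \<subseteq> {- int T..int T} \<and> length us = K}"
    have h0: "h x = 0" if "x < 1 \<or> x > int T" for x
      using that taper_props(3,4)[where lam=lam and T=T and t=x, OF lam_range T1] unfolding h_def by auto
    have A1: "map (\<lambda>f. tapered_ft lam X T f) fs = map (\<lambda>i \<omega>. \<Sum>t\<in>{1..T}. cc i t * Z t \<omega>) [0..<k]"
    proof -
      have fsn: "fs = map ((!) fs) [0..<k]" using len map_nth by metis
      have "map (\<lambda>f. tapered_ft lam X T f) fs = map (\<lambda>i. tapered_ft lam X T (fs ! i)) [0..<k]"
        by (subst fsn) simp
      also have "\<dots> = map (\<lambda>i \<omega>. \<Sum>t\<in>{1..T}. cc i t * Z t \<omega>) [0..<k]"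
        by (intro map_cong refl ext) (simp add: tapered_ft_def cc_def Z_def h_def ex_def mult_ac)
      finally show ?thesis .
    qed
    have integ: "integrable M (\<lambda>\<omega>. \<Prod>i\<in>B. Z (g i) \<omega>)" if B: "finite B" for B and g :: "nat \<Rightarrow> nat"
    proof -
      have eq: "(\<lambda>\<omega>. \<Prod>i\<in>B. Z (g i) \<omega>)
          = (\<lambda>\<omega>. complex_of_real (\<Prod>t\<leftarrow>map (\<lambda>i. int (g i)) (sorted_list_of_set B). X t \<omega>))"
        using B by (simp add: Z_def map_map comp_def prod.distinct_set_conv_list[symmetric])
      show ?thesis unfolding eq by (rule integrable_of_real[OF moments])
    qed
    have A2: "lhs T = (\<Sum>g\<in>PE. (\<Prod>i<k. cc i (g i)) * cum M (map (\<lambda>i. Z (g i)) [0..<k]))"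
      unfolding lhs_def A1 PE_def by (rule cum_multilinear) (auto intro: integ)
    have A3: "cum M (map (\<lambda>i. Z (g i)) [0..<k]) = c (uo g)" for g
    proof -
      have ne: "uo g @ [0] \<noteq> []" by simp
      have "c (uo g) = cum M (map (\<lambda>u \<omega>. complex_of_real (X (int (g K) + u) \<omega>)) (uo g @ [0]))"
        unfolding c_def cumfun_def using cum_stat[OF ne] by simp
      also have "map (\<lambda>u \<omega>. complex_of_real (X (int (g K) + u) \<omega>)) (uo g @ [0]) = map (\<lambda>i. Z (g i)) [0..<k]"
        unfolding kK uo_def by (simp add: Z_def comp_def fun_eq_iff)
      finally show ?thesis by simp
    qed
    have arith: "(\<Sum>j<K. real_of_int (uo g ! j) * fs ! j) + sum_list fs * real (g K)
        = (\<Sum>i<k. fs ! i * real (g i))" for g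
    proof -
      have sl: "sum_list fs = (\<Sum>j<K. fs ! j) + fs ! K"
        using len by (simp add: sum_list_sum_nth kK atLeast0LessThan)
      have "(\<Sum>j<K. real_of_int (uo g ! j) * fs ! j) = (\<Sum>j<K. (real (g j) - real (g K)) * fs ! j)"
        unfolding uo_def by (intro sum.cong) auto
      then show ?thesis unfolding sl kK
        by (simp add: algebra_simps sum_subtractf sum_distrib_left sum_distrib_right)
    qed
    have A4: "(\<Prod>i<k. cc i (g i)) * c (uo g) = F (g K) (uo g)" for g
    proof -
      have p1: "(\<Prod>j<K. complex_of_real (h (int (g K) + uo g ! j))) = (\<Prod>j<K. complex_of_real (h (int (g j))))"
        unfolding uo_def by (intro prod.cong) auto
      have p2: "E (uo g) * ef (g K) = ex (\<Sum>i<k. fs ! i * real (g i))"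
        unfolding E_def ef_def arith[of g, symmetric] by (simp add: ex_add)
      have "(\<Prod>i<k. cc i (g i)) = (\<Prod>i<k. complex_of_real (h (int (g i)))) * ex (\<Sum>i<k. fs ! i * real (g i))"
        unfolding cc_def by (simp add: prod.distrib ex_sum)
      also have "\<dots> = (\<Prod>j<K. complex_of_real (h (int (g j)))) * complex_of_real (h (int (g K))) * (E (uo g) * ef (g K))"
        unfolding p2 by (simp add: kK)
      finally show ?thesis unfolding F_def p1 by (simp add: mult_ac)
    qed
    define \<phi> where "\<phi> g = (g K, uo g)" for g :: "nat \<Rightarrow> nat"
    have A5a: "lhs T = (\<Sum>g\<in>PE. (\<lambda>p. F (fst p) (snd p)) (\<phi> g))"
      unfolding A2 A3 A4 \<phi>_def by simp
    have inj: "inj_on \<phi> PE"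
    proof (rule inj_onI)
      fix g g' assume g: "g \<in> PE" and g': "g' \<in> PE" and eq: "\<phi> g = \<phi> g'"
      then have gK: "g K = g' K" and ueq: "uo g = uo g'" by (auto simp: \<phi>_def)
      have d: "int (g j) - int (g K) = int (g' j) - int (g' K)" if "j < K" for j
        using arg_cong[OF ueq, of "\<lambda>l. l ! j"] that by (simp add: uo_def)
      have lt: "g j = g' j" if "j < K" for j using d[OF that] gK by simp
      show "g = g'"
      proof
        fix i
        show "g i = g' i"
        proof (cases "i < K")
          case True then show ?thesis by (rule lt)
        next
          case False
          show ?thesis
          proof (cases "i = K")
            case True then show ?thesis using gK by simp
          next
            case False2: False
            have "\<not> i < k" using False False2 kK by linarith
            then have ni: "i \<notin> {..<k}" by simp
            show ?thesis using PiE_arb[OF g[unfolded PE_def] ni] PiE_arb[OF g'[unfolded PE_def] ni] by simp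
          qed
        qed
      qed
    qed
    have img: "\<phi> ` PE \<subseteq> {1..T} \<times> L"
    proof
      fix p assume "p \<in> \<phi> ` PE"
      then obtain g where g: "g \<in> PE" and p: "p = \<phi> g" by auto
      have gr: "g i \<in> {1..T}" if "i < k" for i using PiE_mem[OF g[unfolded PE_def], of i] that by simp
      have "g K \<in> {1..T}" using gr[of K] kK by simp
      moreover have "uo g \<in> L"
      proof -
        have "x \<in> {- int T..int T}" if x: "x \<in> set (uo g)" for x
        proof -
          obtain j where j: "j < K" and xj: "x = int (g j) - int (g K)" using x unfolding uo_def by auto
          have "g j \<in> {1..T}" "g K \<in> {1..T}" using gr[of j] gr[of K] j kK by auto
          then show ?thesis unfolding xj by auto
        qed
        then show ?thesis unfolding L_def by (auto simp: uo_def)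
      qed
      ultimately show "p \<in> {1..T} \<times> L" unfolding p \<phi>_def by simp
    qed
    have van: "F (fst p) (snd p) = 0" if p: "p \<in> {1..T} \<times> L - \<phi> ` PE" for p
    proof -
      obtain t us where ptu: "p = (t, us)" by (cases p)
      have t: "t \<in> {1..T}" and us: "us \<in> L" and notimg: "(t, us) \<notin> \<phi> ` PE" using p ptu by auto
      have lus: "length us = K" using us unfolding L_def by simp
      have "\<exists>j<K. h (int t + us ! j) = 0"
      proof (rule ccontr)
        assume "\<not> (\<exists>j<K. h (int t + us ! j) = 0)"
        then have rng: "1 \<le> int t + us ! j \<and> int t + us ! j \<le> int T" if "j < K" for j
          using h0 that by force
        define g where "g i = (if i < K then nat (int t + us ! i) else if i = K then t else undefined)" for i
        have "g \<in> PE" unfolding PE_def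
        proof (rule PiE_I)
          fix i assume i: "i \<in> {..<k}"
          show "g i \<in> {1..T}"
          proof (cases "i < K")
            case True
            have "1 \<le> int t + us ! i" "int t + us ! i \<le> int T" using rng[OF True] by auto
            then show ?thesis using True by (simp add: g_def nat_le_iff le_nat_iff)
          next
            case False
            then have "i = K" using i kK by auto
            then show ?thesis using t by (simp add: g_def)
          qed
        next
          fix i assume "i \<notin> {..<k}"
          then show "g i = undefined" using kK by (simp add: g_def)
        qed
        moreover have "\<phi> g = (t, us)"
        proof -
          have "uo g = us"
          proof -
            have rng': "0 \<le> int t + us ! j" if "j < K" for j using rng[OF that] by linarith
            show ?thesis unfolding uo_def using rng' lus by (intro nth_equalityI) (auto simp: g_def)
          qed
          then show ?thesis by (simp add: \<phi>_def g_def)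
        qed
        ultimately show False using notimg by force
      qed
      then have "(\<Prod>j<K. complex_of_real (h (int t + us ! j))) = 0" by (auto intro: prod_zero)
      then show ?thesis unfolding ptu F_def by simp
    qed
    have finL: "finite L" unfolding L_def by (rule finite_lists_length_eq) simp
    have A5: "lhs T = (\<Sum>p\<in>{1..T} \<times> L. F (fst p) (snd p))"
    proof -
      have "lhs T = (\<Sum>p\<in>\<phi> ` PE. F (fst p) (snd p))"
        unfolding A5a by (simp add: sum.reindex[OF inj] comp_def)
      also have "\<dots> = (\<Sum>p\<in>{1..T} \<times> L. F (fst p) (snd p))"
        by (rule sum.mono_neutral_left) (use finL img van in auto)
      finally show ?thesis .
    qed
    also have "\<dots> = (\<Sum>t\<in>{1..T}. \<Sum>us\<in>L. F t us)"
      by (simp add: sum.cartesian_product case_prod_beta)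
    also have "\<dots> = (\<Sum>us\<in>L. \<Sum>t\<in>{1..T}. F t us)"
      by (rule sum.swap)
    also have "\<dots> = infsum (\<lambda>us. \<Sum>t\<in>{1..T}. F t us) L" using finL by simp
    also have "\<dots> = infsum (\<lambda>us. \<Sum>t\<in>{1..T}. F t us) S"
    proof (rule infsum_cong_neutral)
      fix us assume "us \<in> S - L"
      then have lus: "length us = K" and nL: "\<not> set us \<subseteq> {- int T..int T}" unfolding S_def L_def by auto
      then obtain x where x: "x \<in> set us" "x \<notin> {- int T..int T}" by (meson subsetI)
      then obtain j where j: "j < K" and out: "us ! j \<notin> {- int T..int T}"
        using lus by (metis in_set_conv_nth)
      show "(\<Sum>t\<in>{1..T}. F t us) = 0"
      proof (rule sum.neutral, rule ballI)
        fix t assume t: "t \<in> {1..T}"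
        have "h (int t + us ! j) = 0" using out t by (intro h0) auto
        then have "(\<Prod>j<K. complex_of_real (h (int t + us ! j))) = 0" using j by (auto intro: prod_zero)
        then show "F t us = 0" unfolding F_def by simp
      qed
    qed (auto simp: S_def L_def)
    also have "\<dots> = infsum (\<lambda>us. c us * E us * P1 T us) S"
      unfolding P1_def F_def h_def by (simp add: sum_distrib_left mult_ac)
    finally show ?thesis .
  qed
  have Sk: "S = {us. length us = k - 1}" by (simp add: S_def K_def)
  have claimB: "main T = infsum (\<lambda>us. c us * E us * P2 T) S" for T
  proof -
    have b1: "cum_spectrum M X k (take (k - 1) fs)
        = complex_of_real ((2 * pi) powi (- int k + 1)) * infsum (\<lambda>us. c us * E us) S"
      unfolding cum_spectrum_def Sk
    proof (rule arg_cong2[where f = "(*)"], rule refl, rule infsum_cong)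
      fix us assume "us \<in> {us::int list. length us = k - 1}"
      have "(\<Sum>j<k - 1. real_of_int (us ! j) * take (k - 1) fs ! j) = (\<Sum>j<K. real_of_int (us ! j) * fs ! j)"
        unfolding K_def by (intro sum.cong) auto
      then show "cumfun M X us * exp (- \<i> * complex_of_real (2 * pi * (\<Sum>j<k - 1. real_of_int (us ! j) * take (k - 1) fs ! j)))
          = c us * E us" by (simp add: c_def E_def ex_def)
    qed
    have b2: "fourier_moment lam T k (sum_list fs) = P2 T"
      unfolding fourier_moment_def P2_def
    proof (rule sum.cong[OF refl])
      fix t
      show "complex_of_real (taper lam T (int t) ^ k) * exp (- \<i> * complex_of_real (2 * pi * sum_list fs * real t))
        = ef t * complex_of_real (taper lam T (int t)) * complex_of_real (taper lam T (int t)) ^ K"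
        by (simp add: ef_def ex_def kK mult_ac)
    qed
    have b3: "complex_of_real ((2 * pi) ^ (k - 1)) * complex_of_real ((2 * pi) powi (- int k + 1)) = 1"
    proof -
      have "(2 * pi) ^ (k - 1) * (2 * pi) powi (- int k + 1) = (1::real)"
        by (simp add: kK power_int_def field_simps)
      then show ?thesis by (metis of_real_1 of_real_mult)
    qed
    have "main T = (complex_of_real ((2 * pi) ^ (k - 1)) * complex_of_real ((2 * pi) powi (- int k + 1)))
          * P2 T * infsum (\<lambda>us. c us * E us) S"
      unfolding main_def b1 b2 by (simp add: mult_ac)
    also have "\<dots> = infsum (\<lambda>us. c us * E us) S * P2 T" unfolding b3 by simp
    also have "\<dots> = infsum (\<lambda>us. c us * E us * P2 T) S" by (rule infsum_cmult_left'[symmetric])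
    finally show ?thesis .
  qed
  have tb: "0 \<le> taper lam T a \<and> taper lam T a \<le> 1" if T1: "T \<ge> 1" for T a
    using taper_props(1,2)[where lam=lam and T=T and t=a, OF lam_range T1] by simp
  have P2b: "norm (P2 T) \<le> real T" if T1: "T \<ge> 1" for T
  proof -
    have "norm (P2 T) \<le> (\<Sum>t=1..T. norm (ef t * complex_of_real (taper lam T (int t)) *
      complex_of_real (taper lam T (int t)) ^ K))"
      unfolding P2_def by (rule norm_sum)
    also have "\<dots> \<le> (\<Sum>t=1..T. 1)"
    proof (rule sum_mono)
      fix t
      have "norm (ef t * complex_of_real (taper lam T (int t)) * complex_of_real (taper lam T (int t)) ^ K)
          = \<bar>taper lam T (int t)\<bar> * \<bar>taper lam T (int t)\<bar> ^ K"
        by (simp add: ef_def norm_mult norm_power)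
      also have "\<dots> \<le> 1" using tb[OF T1, of "int t"] by (simp add: mult_le_one power_le_one)
      finally show "norm (ef t * complex_of_real (taper lam T (int t)) * complex_of_real (taper lam T (int t)) ^ K) \<le> 1" .
    qed
    finally show ?thesis by simp
  qed
  have Pdiff: "norm (P1 T us - P2 T) \<le> R T us" if T1: "T \<ge> 1" for T us
  proof -
    define h where "h = taper lam T"
    have "P1 T us - P2 T = (\<Sum>t=1..T. ef t * complex_of_real (h (int t)) *
       ((\<Prod>j<K. complex_of_real (h (int t + us ! j))) - (\<Prod>j<K. complex_of_real (h (int t)))))"
      unfolding P1_def P2_def h_def by (simp add: sum_subtractf[symmetric] ring_distribs prod_constant)
    also have "norm \<dots> \<le> (\<Sum>t=1..T. norm (ef t * complex_of_real (h (int t)) *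
       ((\<Prod>j<K. complex_of_real (h (int t + us ! j))) - (\<Prod>j<K. complex_of_real (h (int t))))))"
      by (rule norm_sum)
    also have "\<dots> \<le> (\<Sum>t=1..T. \<Sum>j<K. \<bar>h (int t + us ! j) - h (int t)\<bar>)"
    proof (rule sum_mono)
      fix t
      have "norm (ef t * complex_of_real (h (int t)) *
       ((\<Prod>j<K. complex_of_real (h (int t + us ! j))) - (\<Prod>j<K. complex_of_real (h (int t)))))
        = \<bar>h (int t)\<bar> * norm ((\<Prod>j<K. complex_of_real (h (int t + us ! j))) - (\<Prod>j<K. complex_of_real (h (int t))))"
        by (simp add: ef_def norm_mult)
      also have "\<dots> \<le> 1 * norm ((\<Prod>j<K. complex_of_real (h (int t + us ! j))) - (\<Prod>j<K. complex_of_real (h (int t))))"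
        using tb[OF T1, of "int t"] unfolding h_def by (intro mult_right_mono) auto
      also have "\<dots> \<le> (\<Sum>j<K. norm (complex_of_real (h (int t + us ! j)) - complex_of_real (h (int t))))"
        unfolding mult_1 h_def by (rule norm_prod_diff) (use tb[OF T1] in auto)
      also have "\<dots> = (\<Sum>j<K. \<bar>h (int t + us ! j) - h (int t)\<bar>)"
        by (simp flip: of_real_diff)
      finally show "norm (ef t * complex_of_real (h (int t)) *
       ((\<Prod>j<K. complex_of_real (h (int t + us ! j))) - (\<Prod>j<K. complex_of_real (h (int t)))))
        \<le> (\<Sum>j<K. \<bar>h (int t + us ! j) - h (int t)\<bar>)" .
    qed
    also have "\<dots> = R T us" unfolding R_def h_def by (rule sum.swap)
    finally show ?thesis .
  qed
  have R0: "0 \<le> R T us" for T us unfolding R_def by (intro sum_nonneg) auto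
  have RK: "R T us \<le> real K * real T" if T1: "T \<ge> 1" for T us
  proof -
    have "R T us \<le> (\<Sum>j<K. \<Sum>t=1..T. (1::real))"
      unfolding R_def using tb[OF T1] by (intro sum_mono) (smt (verit))
    then show ?thesis by simp
  qed
  have RB: "R T us \<le> (\<Sum>j<K. 2 * real_of_int \<bar>us ! j\<bar>)" if T1: "T \<ge> 1" for T us
    unfolding R_def by (intro sum_mono taper_shift_sum_le[OF lam_range T1])
  have diff: "norm (lhs T - main T) \<le> infsum (\<lambda>us. norm (c us) * R T us) S" if T1: "T \<ge> 1" for T
  proof -
    define f1 where "f1 us = c us * E us * (P1 T us - P2 T)" for us
    define f2 where "f2 us = c us * E us * P2 T" for us
    have nf1: "norm (f1 us) \<le> norm (c us) * R T us" for us
      using Pdiff[OF T1, of us] unfolding f1_def by (simp add: norm_mult E_def mult_left_mono)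
    have nf1': "norm (f1 us) \<le> norm (c us) * (real K * real T)" for us
      using nf1[of us] RK[OF T1, of us] by (smt (verit) mult_left_mono norm_ge_zero)
    have nf2: "norm (f2 us) \<le> norm (c us) * real T" for us
      using P2b[OF T1] unfolding f2_def by (simp add: norm_mult E_def mult_left_mono)
    have s1: "(\<lambda>u. norm (f1 u)) summable_on S" "f1 summable_on S"
      using summable_by_norm_bound[OF csum nf1'] by auto
    have s2: "f2 summable_on S"
      using summable_by_norm_bound[OF csum nf2] by auto
    have sR: "(\<lambda>us. norm (c us) * R T us) summable_on S"
      by (rule summable_on_comparison_test[where f = "\<lambda>us. norm (c us) * (real K * real T)"])
         (auto intro!: summable_on_cmult_left csum mult_left_mono RK[OF T1] R0 mult_nonneg_nonneg)
    have "lhs T - main T = infsum (\<lambda>us. f1 us + f2 us) S - infsum f2 S"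
      unfolding claimA[OF T1] claimB f1_def f2_def by (simp add: ring_distribs)
    also have "\<dots> = infsum f1 S"
      using s1 s2 by (simp add: infsum_add)
    finally have "norm (lhs T - main T) = norm (infsum f1 S)" by simp
    also have "\<dots> \<le> infsum (\<lambda>u. norm (f1 u)) S"
      by (rule norm_infsum_bound) (use s1 in simp)
    also have "\<dots> \<le> infsum (\<lambda>us. norm (c us) * R T us) S"
      by (rule infsum_mono[OF s1(1) sR nf1])
    finally show ?thesis .
  qed
  have ev: "eventually (\<lambda>T. norm (lhs T - main T) \<le> \<epsilon> * norm (complex_of_nat T)) at_top"
    if e: "\<epsilon> > 0" for \<epsilon> :: real
  proof -
    have "eventually (\<lambda>T. (\<lambda>u. norm (c u) * R T u) summable_on S \<and>
        infsum (\<lambda>u. norm (c u) * R T u) S \<le> \<epsilon> * real T) at_top"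
      by (rule infsum_weighted_small[OF csum _ _ _ RK RB e]) (auto simp: R0)
    then show ?thesis
      using eventually_ge_at_top[of 1]
    proof eventually_elim
      case (elim T)
      then show ?case using diff[of T] by simp
    qed
  qed
  show ?thesis using ev unfolding lhs_def main_def by (intro landau_o.smallI) auto
qed


end
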